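(* Let $\beta<0$, $G_\beta(u)=-u^\beta$, $L\in\mathbb{N}$, $d>0$ and $u_0\in\mathcal{P}_{L,d}$. For $\delta>0$ let $u_{0,\delta}=u_0\vee\delta$ and let $u_\delta$ be a solution of $\partial_tu=\Delta G_\beta(u)$, $u(0)=u_{0,\delta}$, with $\delta\le u_\delta\le\|u_{0,\delta}\|_\infty$. Then there exist $t^*=t^*(\beta,L,d)>0$ and $C=C(\beta,L,d)$ such that $|u_\delta(t_2,k)-u_\delta(t_1,k)|\le C|t_2-t_1|^{\frac1{1-\beta}}$ for all $t_1,t_2\in[0,t^*]$, $k\in\mathbb{Z}$, and all $\delta>0$.
   Context: $\Delta v(k)=v(k-1)-2v(k)+v(k+1)$. $\sigma_+(u,k,d)=\inf\{l>k:u(l)\ge d\}$; $\mathcal{P}_{L,d}=\{u\in\ell^\infty_+(\mathbb{Z}):\sup_k(\sigma_+(u,k,d)-k)\le L\}$. A solution: $u\in C^0([0,\infty);\ell^\infty_+(\mathbb{Z}))$ with the initial datum, each $u(\cdot,k)\in C^1((0,\infty);(0,\infty))$ satisfying the equation pointwise. *)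

theory Defs
  imports "HOL-Analysis.Analysis"
begin

definition dlap :: "(int \<Rightarrow> real) \<Rightarrow> int \<Rightarrow> real" where
  "dlap v k = v (k - 1) - 2 * v k + v (k + 1)"

definition G :: "real \<Rightarrow> real \<Rightarrow> real" where
  "G \<beta> x = - (x powr \<beta>)"

definition linf_plus :: "(int \<Rightarrow> real) set" where
  "linf_plus = {u. (\<forall>k. 0 \<le> u k) \<and> bounded (range u)}"

definition supnorm :: "(int \<Rightarrow> real) \<Rightarrow> real" where
  "supnorm u = (SUP k. \<bar>u k\<bar>)"

text \<open>sigma_+(u,k,d) = inf {l > k. u l \<ge> d}, with inf of the empty set = +infinity.\<close>
definition sigma_plus :: "(int \<Rightarrow> real) \<Rightarrow> int \<Rightarrow> real \<Rightarrow> ereal" where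
  "sigma_plus u k d = Inf ((\<lambda>l. ereal (real_of_int l)) ` {l. k < l \<and> d \<le> u l})"

definition P_set :: "nat \<Rightarrow> real \<Rightarrow> (int \<Rightarrow> real) set" where
  "P_set L d = {u \<in> linf_plus.
     (SUP k. sigma_plus u k d - ereal (real_of_int k)) \<le> ereal (real L)}"

definition is_solution :: "real \<Rightarrow> (int \<Rightarrow> real) \<Rightarrow> (real \<Rightarrow> int \<Rightarrow> real) \<Rightarrow> bool" where
  "is_solution \<beta> v0 u \<longleftrightarrow>
     u 0 = v0 \<and>
     (\<forall>t\<ge>0. u t \<in> linf_plus) \<and>
     (\<forall>t\<ge>0. ((\<lambda>s. supnorm (\<lambda>k. u s k - u t k)) \<longlongrightarrow> 0) (at t within {0..})) \<and>
     (\<forall>k. \<exists>u'. (\<forall>t>0. ((\<lambda>s. u s k) has_real_derivative u' t) (at t))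
               \<and> continuous_on {0<..} u'
               \<and> (\<forall>t>0. u t k > 0)
               \<and> (\<forall>t>0. u' t = dlap (\<lambda>j. G \<beta> (u t j)) k))"

end

theory Submission
  imports Defs
begin

lemma interval_growth:
  fixes f D :: "real \<Rightarrow> real" and s r K :: real
  assumes sr: "s \<le> r" and cont: "continuous_on {s..r} f"
    and der: "\<And>x. s < x \<Longrightarrow> x < r \<Longrightarrow> (f has_real_derivative D x) (at x)"
    and f0: "f s \<le> 0"
    and Db: "\<And>x. s < x \<Longrightarrow> x < r \<Longrightarrow> f x > 0 \<Longrightarrow> D x \<le> K"
    and K: "K \<ge> 0"
  shows "f r \<le> K * (r - s)"
proof (rule ccontr)
  assume "\<not> ?thesis"
  hence fr: "f r > K * (r - s)" by simp
  have fr0: "f r > 0" using fr K sr by (smt (verit) mult_nonneg_nonneg)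
  define A where "A = {s..r} \<inter> f -` {..0}"
  have clA: "closed A" unfolding A_def by (rule continuous_closed_preimage[OF cont]) auto
  have sA: "s \<in> A" using f0 sr by (auto simp: A_def)
  have bA: "bdd_above A" unfolding A_def by (rule bdd_aboveI[of _ r]) auto
  define r0 where "r0 = Sup A"
  have r0A: "r0 \<in> A" unfolding r0_def using closed_contains_Sup[OF _ bA clA] sA by auto
  have r0r: "s \<le> r0" "r0 \<le> r" "f r0 \<le> 0" using r0A by (auto simp: A_def)
  have r0ne: "r0 < r" using r0r fr0 by (cases "r0 = r") auto
  have pos: "f x > 0" if "r0 < x" "x \<le> r" for x
  proof (rule ccontr)
    assume "\<not> f x > 0"
    hence "x \<in> A" using that r0r by (auto simp: A_def)
    hence "x \<le> r0" unfolding r0_def by (rule cSup_upper[OF _ bA])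
    thus False using that by simp
  qed
  have "(\<lambda>x. K * x - f x) r0 \<le> (\<lambda>x. K * x - f x) r"
  proof (rule DERIV_nonneg_imp_increasing_open[of r0 r])
    show "r0 \<le> r" using r0r by simp
    fix x assume x: "r0 < x" "x < r"
    have "((\<lambda>x. K * x - f x) has_real_derivative K - D x) (at x)"
      using der[of x] x r0r by (auto intro!: derivative_eq_intros)
    moreover have "K - D x \<ge> 0" using Db[of x] pos[of x] x r0r by auto
    ultimately show "\<exists>y. ((\<lambda>x. K * x - f x) has_real_derivative y) (at x) \<and> 0 \<le> y" by blast
  next
    show "continuous_on {r0..r} (\<lambda>x. K * x - f x)"
      using cont r0r by (auto intro!: continuous_intros elim: continuous_on_subset)
  qed
  hence "f r \<le> f r0 + K * (r - r0)" by (simp add: algebra_simps)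
  also have "\<dots> \<le> K * (r - s)" using r0r K by (smt (verit) mult_left_mono)
  finally show False using fr by simp
qed

lemma comparison_step:
  fixes e D :: "real \<Rightarrow> int \<Rightarrow> real" and T \<Lambda> B s :: real
  assumes Lpos: "\<Lambda> > 0"
    and cont: "\<And>j. continuous_on {0..T} (\<lambda>t. e t j)"
    and der: "\<And>j t. 0 < t \<Longrightarrow> t < T \<Longrightarrow> ((\<lambda>t. e t j) has_real_derivative D t j) (at t)"
    and Db: "\<And>j t. 0 < t \<Longrightarrow> t < T \<Longrightarrow> e t j > 0 \<Longrightarrow>
               D t j \<le> \<Lambda> * (max 0 (e t (j - 1)) + max 0 (e t (j + 1)))"
    and bnd: "\<And>j t. 0 \<le> t \<Longrightarrow> t \<le> T \<Longrightarrow> e t j \<le> B"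
    and s: "0 \<le> s" "s \<le> T" and es: "\<And>j. e s j \<le> 0"
  shows "\<And>j r. s \<le> r \<Longrightarrow> r \<le> min (s + 1 / (4 * \<Lambda>)) T \<Longrightarrow> e r j \<le> 0"
proof -
  define s1 where "s1 = min (s + 1 / (4 * \<Lambda>)) T"
  define S where "S = {max 0 (e r j) | r j. r \<in> {s..s1}}"
  have "max 0 (e s 0) \<in> S" using s Lpos unfolding S_def s1_def by auto
  hence Sne: "S \<noteq> {}" by blast
  have Sbdd: "bdd_above S" unfolding S_def s1_def
  proof (rule bdd_aboveI[of _ "max 0 B"])
    fix x assume "x \<in> {max 0 (e r j) |r j. r \<in> {s..min (s + 1 / (4 * \<Lambda>)) T}}"
    then obtain r j where "x = max 0 (e r j)" "s \<le> r" "r \<le> T" by auto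
    thus "x \<le> max 0 B" using bnd[of r j] s by auto
  qed
  define E where "E = Sup S"
  have inS: "max 0 (e r j) \<le> E" if "s \<le> r" "r \<le> s1" for r j
    unfolding E_def by (rule cSup_upper[OF _ Sbdd]) (use that in \<open>auto simp: S_def\<close>)
  have E0: "E \<ge> 0" using inS[of s 0] s Lpos by (smt (verit) s1_def divide_pos_pos)
  have grow: "e r j \<le> (2 * \<Lambda> * E) * (r - s)" if r: "s \<le> r" "r \<le> s1" for r j
  proof (rule interval_growth[where f="\<lambda>t. e t j" and D="\<lambda>t. D t j"])
    show "s \<le> r" using r by simp
    show "continuous_on {s..r} (\<lambda>t. e t j)"
      using cont[of j] by (rule continuous_on_subset) (use r s s1_def in auto)
    show "((\<lambda>t. e t j) has_real_derivative D x j) (at x)" if "s < x" "x < r" for x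
      using der[of x j] that r s s1_def by auto
    show "e s j \<le> 0" by (rule es)
    show "D x j \<le> 2 * \<Lambda> * E" if "s < x" "x < r" "e x j > 0" for x
    proof -
      have "D x j \<le> \<Lambda> * (max 0 (e x (j - 1)) + max 0 (e x (j + 1)))"
        using Db[of x j] that r s s1_def by auto
      also have "\<dots> \<le> \<Lambda> * (E + E)"
        using inS[of x "j-1"] inS[of x "j+1"] that r Lpos
        by (intro mult_left_mono add_mono) auto
      finally show ?thesis by simp
    qed
    show "0 \<le> 2 * \<Lambda> * E" using E0 Lpos by simp
  qed
  have half: "max 0 (e r j) \<le> E / 2" if r: "s \<le> r" "r \<le> s1" for r j
  proof -
    have "r - s \<le> 1 / (4 * \<Lambda>)" using r s1_def by simp
    hence "(2 * \<Lambda> * E) * (r - s) \<le> (2 * \<Lambda> * E) * (1 / (4 * \<Lambda>))"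
      using E0 Lpos by (intro mult_left_mono) auto
    also have "\<dots> = E / 2" using Lpos by (simp add: field_simps)
    finally show ?thesis using grow[OF r, of j] E0 by simp
  qed
  have "E \<le> E / 2" unfolding E_def
    by (rule cSup_least[OF Sne]) (use half in \<open>auto simp: S_def E_def\<close>)
  hence "E \<le> 0" by simp
  thus "\<And>j r. s \<le> r \<Longrightarrow> r \<le> min (s + 1 / (4 * \<Lambda>)) T \<Longrightarrow> e r j \<le> 0"
    using inS unfolding s1_def by (smt (verit))
qed

lemma comparison:
  fixes e D :: "real \<Rightarrow> int \<Rightarrow> real" and T \<Lambda> B :: real
  assumes Lpos: "\<Lambda> > 0"
    and cont: "\<And>j. continuous_on {0..T} (\<lambda>t. e t j)"
    and der: "\<And>j t. 0 < t \<Longrightarrow> t < T \<Longrightarrow> ((\<lambda>t. e t j) has_real_derivative D t j) (at t)"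
    and Db: "\<And>j t. 0 < t \<Longrightarrow> t < T \<Longrightarrow> e t j > 0 \<Longrightarrow>
               D t j \<le> \<Lambda> * (max 0 (e t (j - 1)) + max 0 (e t (j + 1)))"
    and bnd: "\<And>j t. 0 \<le> t \<Longrightarrow> t \<le> T \<Longrightarrow> e t j \<le> B"
    and init: "\<And>j. e 0 j \<le> 0" and T: "T \<ge> 0"
  shows "\<And>j t. 0 \<le> t \<Longrightarrow> t \<le> T \<Longrightarrow> e t j \<le> 0"
proof -
  define h where "h = 1 / (4 * \<Lambda>)"
  have hpos: "h > 0" using Lpos by (simp add: h_def)
  have P: "\<forall>j t. 0 \<le> t \<longrightarrow> t \<le> min (real n * h) T \<longrightarrow> e t j \<le> 0" for n
  proof (induction n)
    case 0
    then show ?case using init T by (auto simp: min_def)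
  next
    case (Suc n)
    show ?case
    proof (intro allI impI)
      fix j t assume t: "0 \<le> t" "t \<le> min (real (Suc n) * h) T"
      show "e t j \<le> 0"
      proof (cases "t \<le> min (real n * h) T")
        case True thus ?thesis using Suc.IH t by blast
      next
        case False
        define s where "s = real n * h"
        have sT: "0 \<le> s" "s \<le> T" using False t hpos by (auto simp: s_def)
        have es: "e s j' \<le> 0" for j' using Suc.IH sT by (auto simp: s_def)
        have "real (Suc n) * h = s + h" by (simp add: s_def algebra_simps)
        hence "s \<le> t" "t \<le> min (s + 1 / (4 * \<Lambda>)) T"
          using False t by (auto simp: s_def h_def)
        thus ?thesis
          using comparison_step[OF Lpos cont der Db bnd sT es] by blast
      qed
    qed
  qed
  obtain n :: nat where n: "T / h \<le> real n" using real_arch_simple by blast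
  have "T \<le> real n * h" using n hpos by (simp add: field_simps)
  thus "\<And>j t. 0 \<le> t \<Longrightarrow> t \<le> T \<Longrightarrow> e t j \<le> 0" using P[of n] by (auto simp: min_def)
qed

lemma powr_subadd:
  fixes x y a :: real
  assumes "0 \<le> x" "0 \<le> y" "0 < a" "a \<le> 1"
  shows "(x + y) powr a \<le> x powr a + y powr a"
proof (cases "x + y = 0")
  case True thus ?thesis using assms by simp
next
  case False
  hence xy: "x + y > 0" using assms by simp
  have h1: "x / (x + y) \<le> (x / (x + y)) powr a"
    using powr_mono'[of a 1 "x / (x+y)"] assms xy by simp
  have h2: "y / (x + y) \<le> (y / (x + y)) powr a"
    using powr_mono'[of a 1 "y / (x+y)"] assms xy by simp
  have "(x + y) powr a = (x + y) powr a * (x / (x + y) + y / (x + y))"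
    using xy by (simp add: add_divide_distrib[symmetric])
  also have "\<dots> \<le> (x + y) powr a * ((x / (x + y)) powr a + (y / (x + y)) powr a)"
    using h1 h2 by (intro mult_left_mono add_mono) auto
  also have "\<dots> = x powr a + y powr a"
    using xy assms by (simp add: powr_divide distrib_left)
  finally show ?thesis .
qed

lemma powr_lip:
  fixes \<beta> \<delta> x y :: real
  assumes b: "\<beta> < 0" and d: "0 < \<delta>" "\<delta> \<le> x" and y: "0 < y"
  shows "x powr \<beta> - y powr \<beta> \<le> (- \<beta> * \<delta> powr (\<beta> - 1)) * max 0 (y - x)"
proof (cases "y \<le> x")
  case True
  hence "x powr \<beta> \<le> y powr \<beta>" using powr_mono2'[of \<beta> y x] b y by simp
  thus ?thesis using True by simp
next
  case False
  have "\<exists>z. x < z \<and> z < y \<and> (y powr \<beta> - x powr \<beta> = (y - x) * (\<beta> * z powr (\<beta> - 1)))"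
    by (rule MVT2) (use False d in \<open>auto intro!: has_real_derivative_powr\<close>)
  then obtain z where z: "x < z" "z < y" "y powr \<beta> - x powr \<beta> = (y - x) * (\<beta> * z powr (\<beta> - 1))"
    by blast
  have "z powr (\<beta> - 1) \<le> \<delta> powr (\<beta> - 1)" using powr_mono2'[of "\<beta> - 1" \<delta> z] b d z by simp
  hence "x powr \<beta> - y powr \<beta> = (y - x) * (- \<beta> * z powr (\<beta> - 1))" using z by simp
  also have "\<dots> \<le> (y - x) * (- \<beta> * \<delta> powr (\<beta> - 1))"
    using \<open>z powr (\<beta> - 1) \<le> \<delta> powr (\<beta> - 1)\<close> False b by (intro mult_left_mono) auto
  finally show ?thesis using False by (simp add: mult.commute)
qed

lemma Pset_window:
  assumes "u0 \<in> P_set L d"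
  shows "\<exists>l. k < l \<and> l \<le> k + int L \<and> d \<le> u0 l"
proof (rule ccontr)
  assume H: "\<not> ?thesis"
  have le: "sigma_plus u0 k d - ereal (real_of_int k) \<le> ereal (real L)"
    using assms unfolding P_set_def by (auto simp: SUP_le_iff)
  have ge: "ereal (real_of_int (k + int L + 1)) \<le> sigma_plus u0 k d"
    unfolding sigma_plus_def
  proof (rule Inf_greatest)
    fix x assume "x \<in> (\<lambda>l. ereal (real_of_int l)) ` {l. k < l \<and> d \<le> u0 l}"
    then obtain l where "x = ereal (real_of_int l)" "k < l" "d \<le> u0 l" by auto
    moreover have "k + int L + 1 \<le> l" proof (rule ccontr)
      assume "\<not> k + int L + 1 \<le> l"
      thus False using H \<open>k < l\<close> \<open>d \<le> u0 l\<close> by auto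
    qed
    ultimately show "ereal (real_of_int (k + int L + 1)) \<le> x" by simp
  qed
  show False
  proof (cases "sigma_plus u0 k d")
    case (real r)
    thus False using le ge by simp
  next
    case PInf thus False using le by simp
  next
    case MInf thus False using ge by simp
  qed
qed

definition lev :: "(int \<Rightarrow> real) \<Rightarrow> real \<Rightarrow> int \<Rightarrow> nat" where
  "lev u0 d j = (LEAST n. d \<le> u0 (j + int n))"

lemma lev_facts:
  assumes W: "\<And>k. \<exists>l. k < l \<and> l \<le> k + int L \<and> d \<le> u0 l"
  shows "lev u0 d j + 1 \<le> L" "d \<le> u0 (j + int (lev u0 d j))"
    "lev u0 d j = 0 \<longleftrightarrow> d \<le> u0 j"
    "lev u0 d (j - 1) = (if d \<le> u0 (j - 1) then 0 else Suc (lev u0 d j))"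
proof -
  obtain l where l: "j - 1 < l" "l \<le> j - 1 + int L" "d \<le> u0 l" using W by blast
  define n where "n = nat (l - j)"
  have n: "d \<le> u0 (j + int n)" "n + 1 \<le> L" using l by (auto simp: n_def)
  show "d \<le> u0 (j + int (lev u0 d j))" unfolding lev_def by (rule LeastI[of _ n]) (rule n(1))
  have "lev u0 d j \<le> n" unfolding lev_def by (rule Least_le) (rule n(1))
  thus "lev u0 d j + 1 \<le> L" using n by simp
  show "lev u0 d j = 0 \<longleftrightarrow> d \<le> u0 j"
  proof
    assume "lev u0 d j = 0" thus "d \<le> u0 j" using \<open>d \<le> u0 (j + int (lev u0 d j))\<close> by simp
  next
    assume "d \<le> u0 j" thus "lev u0 d j = 0" unfolding lev_def by (intro Least_eq_0) simp
  qed
  show "lev u0 d (j - 1) = (if d \<le> u0 (j - 1) then 0 else Suc (lev u0 d j))"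
  proof (cases "d \<le> u0 (j - 1)")
    case True thus ?thesis unfolding lev_def by (simp add: Least_eq_0)
  next
    case False
    have P: "d \<le> u0 (j - 1 + int (Suc n))" using n(1) by (simp add: algebra_simps)
    have "lev u0 d (j - 1) = Suc (LEAST m. d \<le> u0 (j - 1 + int (Suc m)))"
      unfolding lev_def by (rule Least_Suc[where P="\<lambda>m. d \<le> u0 (j - 1 + int m)", OF P]) (use False in simp)
    also have "(\<lambda>m. d \<le> u0 (j - 1 + int (Suc m))) = (\<lambda>m. d \<le> u0 (j + int m))"
      by (simp add: algebra_simps)
    finally show ?thesis using False by (simp add: lev_def)
  qed
qed

definition alp :: "real \<Rightarrow> real" where "alp \<beta> = 1 / (1 - \<beta>)"
definition gfun :: "nat \<Rightarrow> nat \<Rightarrow> real" where "gfun N m = real m * (2 * real N + 1 - real m)"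
definition hfun :: "nat \<Rightarrow> nat \<Rightarrow> real" where "hfun N m = (if m = 0 then 1 else gfun N m)"
definition Sc :: "nat \<Rightarrow> real" where "Sc N = (2 * real N + 1)^2"
definition bc :: "real \<Rightarrow> nat \<Rightarrow> real" where "bc \<beta> N = 2 * Sc N / alp \<beta>"
definition Fw :: "real \<Rightarrow> real \<Rightarrow> nat \<Rightarrow> nat \<Rightarrow> real \<Rightarrow> real" where
  "Fw \<beta> d N m t = (if m = 0 then d - bc \<beta> N * t powr alp \<beta>
                    else gfun N m powr (1 / \<beta>) * t powr alp \<beta>)"
definition Fd :: "real \<Rightarrow> real \<Rightarrow> nat \<Rightarrow> nat \<Rightarrow> real \<Rightarrow> real" where
  "Fd \<beta> d N m t = (if m = 0 then - bc \<beta> N * (alp \<beta> * t powr (alp \<beta> - 1))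
                    else gfun N m powr (1 / \<beta>) * (alp \<beta> * t powr (alp \<beta> - 1)))"

lemma alp_facts: assumes "\<beta> < 0" shows "0 < alp \<beta>" "alp \<beta> < 1" "alp \<beta> * \<beta> = alp \<beta> - 1"
  using assms by (auto simp: alp_def field_simps)

lemma gfun_facts:
  assumes "1 \<le> m" "m \<le> N"
  shows "1 \<le> gfun N m" "gfun N m \<le> Sc N"
proof -
  have a: "1 \<le> real m" "real m \<le> real N" using assms by auto
  have b: "1 \<le> 2 * real N + 1 - real m" using a by simp
  show "1 \<le> gfun N m" unfolding gfun_def using mult_mono[OF a(1) b] by simp
  have "gfun N m \<le> (2 * real N + 1) * (2 * real N + 1 - real m)"
    unfolding gfun_def using a by (intro mult_right_mono) auto
  also have "\<dots> \<le> (2 * real N + 1) * (2 * real N + 1)"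
    using a by (intro mult_left_mono) auto
  finally show "gfun N m \<le> Sc N" by (simp add: Sc_def power2_eq_square)
qed

lemma hfun_facts:
  assumes "m \<le> N"
  shows "1 \<le> hfun N m" "hfun N m \<le> Sc N"
  using gfun_facts[of m N] assms by (auto simp: hfun_def Sc_def)

lemma Fw_pos_pow:
  assumes b: "\<beta> < 0" and t: "0 < t" and m: "1 \<le> m" "m \<le> N"
  shows "Fw \<beta> d N m t > 0" "Fw \<beta> d N m t powr \<beta> = gfun N m * t powr (alp \<beta> - 1)"
proof -
  have g: "gfun N m \<ge> 1" using gfun_facts m by blast
  show "Fw \<beta> d N m t > 0" using m g t by (simp add: Fw_def)
  have "Fw \<beta> d N m t powr \<beta> = (gfun N m powr (1/\<beta>)) powr \<beta> * (t powr alp \<beta>) powr \<beta>"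
    using m by (simp add: Fw_def powr_mult)
  also have "\<dots> = gfun N m * t powr (alp \<beta> - 1)"
    using g b alp_facts[OF b] by (simp add: powr_powr)
  finally show "Fw \<beta> d N m t powr \<beta> = gfun N m * t powr (alp \<beta> - 1)" .
qed

lemma Fw0_facts:
  assumes b: "\<beta> < 0" and d: "0 < d" and t: "0 < t"
    and ta: "t powr alp \<beta> \<le> d / (2 * (bc \<beta> N + 1))"
    and tb: "(d / 2) powr \<beta> \<le> t powr (alp \<beta> - 1)"
  shows "d / 2 \<le> Fw \<beta> d N 0 t" "Fw \<beta> d N 0 t \<le> d" "t powr alp \<beta> \<le> d / 2"
    "Fw \<beta> d N 0 t powr \<beta> \<le> t powr (alp \<beta> - 1)"
proof -
  have bc0: "bc \<beta> N \<ge> 0" using alp_facts[OF b] by (simp add: bc_def Sc_def)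
  have "bc \<beta> N * t powr alp \<beta> \<le> (bc \<beta> N + 1) * (d / (2 * (bc \<beta> N + 1)))"
    using ta bc0 by (intro mult_mono) auto
  also have "\<dots> = d / 2" using bc0 by (simp add: field_simps)
  finally show F: "d / 2 \<le> Fw \<beta> d N 0 t" by (simp add: Fw_def)
  show "Fw \<beta> d N 0 t \<le> d" using bc0 by (simp add: Fw_def)
  have "d / (2 * (bc \<beta> N + 1)) \<le> d / 2" using bc0 d by (intro divide_left_mono) auto
  thus "t powr alp \<beta> \<le> d / 2" using ta by linarith
  have "Fw \<beta> d N 0 t powr \<beta> \<le> (d / 2) powr \<beta>"
    using powr_mono2'[of \<beta> "d/2" "Fw \<beta> d N 0 t"] F b d by simp
  thus "Fw \<beta> d N 0 t powr \<beta> \<le> t powr (alp \<beta> - 1)" using tb by simp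
qed

lemma Fw_pbound:
  assumes b: "\<beta> < 0" and d: "0 < d" and t: "0 < t"
    and ta: "t powr alp \<beta> \<le> d / (2 * (bc \<beta> N + 1))"
    and tb: "(d / 2) powr \<beta> \<le> t powr (alp \<beta> - 1)" and m: "m \<le> N"
  shows "Fw \<beta> d N m t powr \<beta> \<le> hfun N m * t powr (alp \<beta> - 1)"
    "Fw \<beta> d N m t > 0" "Fw \<beta> d N m t \<le> d"
    "Sc N powr (1 / \<beta>) * t powr alp \<beta> \<le> Fw \<beta> d N m t"
proof -
  have c1: "Sc N powr (1 / \<beta>) \<le> 1"
    using powr_mono2'[of "1/\<beta>" 1 "Sc N"] b by (simp add: Sc_def)
  have c0: "Sc N powr (1 / \<beta>) \<ge> 0" by simp
  note F0 = Fw0_facts[OF b d t ta tb]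
  have "Fw \<beta> d N m t powr \<beta> \<le> hfun N m * t powr (alp \<beta> - 1) \<and>
    Fw \<beta> d N m t > 0 \<and> Fw \<beta> d N m t \<le> d \<and>
    Sc N powr (1 / \<beta>) * t powr alp \<beta> \<le> Fw \<beta> d N m t"
  proof (cases "m = 0")
    case True
    have "Sc N powr (1 / \<beta>) * t powr alp \<beta> \<le> 1 * t powr alp \<beta>"
      using c1 by (intro mult_right_mono) auto
    thus ?thesis using F0 True d by (simp add: hfun_def)
  next
    case False
    hence m1: "1 \<le> m" by simp
    note P = Fw_pos_pow[OF b t m1 m, of d]
    have g: "1 \<le> gfun N m" "gfun N m \<le> Sc N" using gfun_facts[OF m1 m] by auto
    have a1: "gfun N m powr (1 / \<beta>) \<le> 1"
      using powr_mono2'[of "1/\<beta>" 1 "gfun N m"] b g by simp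
    have "Fw \<beta> d N m t \<le> 1 * t powr alp \<beta>"
      using False mult_right_mono[OF a1, of "t powr alp \<beta>"] by (simp add: Fw_def)
    hence "Fw \<beta> d N m t \<le> d" using F0 d by simp
    moreover have a2: "Sc N powr (1 / \<beta>) \<le> gfun N m powr (1 / \<beta>)"
      using powr_mono2'[of "1/\<beta>" "gfun N m" "Sc N"] b g by simp
    moreover have "Sc N powr (1 / \<beta>) * t powr alp \<beta> \<le> Fw \<beta> d N m t"
      using False a2 by (simp add: Fw_def mult_right_mono)
    ultimately show ?thesis using P False by (simp add: hfun_def)
  qed
  thus "Fw \<beta> d N m t powr \<beta> \<le> hfun N m * t powr (alp \<beta> - 1)"
    "Fw \<beta> d N m t > 0" "Fw \<beta> d N m t \<le> d"
    "Sc N powr (1 / \<beta>) * t powr alp \<beta> \<le> Fw \<beta> d N m t" by auto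
qed

lemma gfun_diff:
  "1 \<le> m \<Longrightarrow> gfun N m - gfun N (m - 1) = 2 * real N + 2 - 2 * real m"
  "gfun N (m + 1) - gfun N m = 2 * real N - 2 * real m"
  by (simp_all add: gfun_def of_nat_diff algebra_simps)

lemma garith:
  assumes "1 \<le> m" "m \<le> N" "ml \<le> N" "ml = 0 \<or> ml = m + 1"
  shows "1 \<le> 2 * gfun N m - hfun N (m - 1) - hfun N ml"
proof -
  have g1: "1 \<le> gfun N m" using gfun_facts assms by blast
  have gone: "gfun N 1 = 2 * real N" by (simp add: gfun_def)
  note D1 = gfun_diff(1)[OF assms(1), of N] and D2 = gfun_diff(2)[of N m]
  show ?thesis
  proof (cases "m = 1")
    case True
    thus ?thesis using assms gone D2 by (auto simp: hfun_def)
  next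
    case False
    hence "m - 1 \<noteq> 0" using assms by simp
    thus ?thesis using assms g1 D1 D2 by (auto simp: hfun_def)
  qed
qed

lemma Fw_sub:
  assumes b: "\<beta> < 0" and d: "0 < d" and t: "0 < t"
    and ta: "t powr alp \<beta> \<le> d / (2 * (bc \<beta> N + 1))"
    and tb: "(d / 2) powr \<beta> \<le> t powr (alp \<beta> - 1)"
    and m: "m \<le> N" "ml \<le> N" "mr \<le> N"
    and st: "m = 0 \<or> (mr = m - 1 \<and> (ml = 0 \<or> ml = m + 1))"
  shows "Fd \<beta> d N m t \<le> 2 * Fw \<beta> d N m t powr \<beta> - Fw \<beta> d N ml t powr \<beta> - Fw \<beta> d N mr t powr \<beta>"
proof -
  define T where "T = t powr (alp \<beta> - 1)"
  have T0: "T > 0" using t by (simp add: T_def)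
  note A = alp_facts[OF b]
  note pl = Fw_pbound(1)[OF b d t ta tb m(2)] and pr = Fw_pbound(1)[OF b d t ta tb m(3)]
  note hl = hfun_facts[OF m(2)] and hr = hfun_facts[OF m(3)]
  show ?thesis
  proof (cases "m = 0")
    case True
    have "Fd \<beta> d N m t = - 2 * Sc N * T" using True A by (simp add: Fd_def bc_def T_def)
    moreover have "Fw \<beta> d N ml t powr \<beta> \<le> Sc N * T"
      using pl hl T0 by (smt (verit) T_def mult_right_mono)
    moreover have "Fw \<beta> d N mr t powr \<beta> \<le> Sc N * T"
      using pr hr T0 by (smt (verit) T_def mult_right_mono)
    moreover have "0 \<le> Fw \<beta> d N m t powr \<beta>" by simp
    ultimately show ?thesis by linarith
  next
    case False
    hence m1: "1 \<le> m" by simp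
    have st': "mr = m - 1" "ml = 0 \<or> ml = m + 1" using st False by auto
    have ga: "1 \<le> 2 * gfun N m - hfun N (m - 1) - hfun N ml" by (rule garith[OF m1 m(1) m(2) st'(2)])
    have g: "1 \<le> gfun N m" using gfun_facts m1 m by blast
    have a1: "gfun N m powr (1 / \<beta>) \<le> 1"
      using powr_mono2'[of "1/\<beta>" 1 "gfun N m"] b g by simp
    have "Fd \<beta> d N m t = gfun N m powr (1 / \<beta>) * alp \<beta> * T" using False by (simp add: Fd_def T_def)
    also have "\<dots> \<le> 1 * 1 * T" using a1 A T0 by (intro mult_right_mono mult_mono) auto
    also have "\<dots> \<le> (2 * gfun N m - hfun N (m - 1) - hfun N ml) * T"
      using ga T0 by (intro mult_right_mono) auto
    also have "\<dots> = 2 * (gfun N m * T) - hfun N ml * T - hfun N mr * T"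
      using st' by (simp add: algebra_simps)
    also have "\<dots> \<le> 2 * Fw \<beta> d N m t powr \<beta> - Fw \<beta> d N ml t powr \<beta> - Fw \<beta> d N mr t powr \<beta>"
      using Fw_pos_pow(2)[OF b t m1 m(1), of d] pl pr by (simp add: T_def)
    finally show ?thesis .
  qed
qed

lemma Fw_deriv:
  assumes "0 < t"
  shows "((\<lambda>t. Fw \<beta> d N m t) has_real_derivative Fd \<beta> d N m t) (at t)"
proof (cases "m = 0")
  case True
  show ?thesis using True assms unfolding Fw_def Fd_def
    by (auto intro!: derivative_eq_intros)
next
  case False
  show ?thesis using False assms unfolding Fw_def Fd_def
    by (auto intro!: derivative_eq_intros)
qed

lemma powr_cont0:
  assumes "0 < a" shows "continuous_on {0..T} (\<lambda>t::real. t powr a)"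
  by (rule continuous_on_powr') (use assms in \<open>auto intro: continuous_intros\<close>)

lemma Fw_cont:
  assumes "\<beta> < 0" shows "continuous_on {0..T} (\<lambda>t. Fw \<beta> d N m t)"
  using powr_cont0[OF alp_facts(1)[OF assms], of T] unfolding Fw_def
  by (cases "m = 0") (auto intro!: continuous_intros)

lemma sol_facts:
  assumes sol: "is_solution \<beta> v0 u"
    and bnd: "\<forall>t\<ge>0. \<forall>k. \<delta> \<le> u t k \<and> u t k \<le> M"
  shows "\<And>k t. 0 < t \<Longrightarrow> ((\<lambda>s. u s k) has_real_derivative dlap (\<lambda>j. G \<beta> (u t j)) k) (at t)"
    "\<And>k T. continuous_on {0..T} (\<lambda>s. u s k)" "u 0 = v0"
proof -
  show "u 0 = v0" using sol by (simp add: is_solution_def)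
  show D: "((\<lambda>s. u s k) has_real_derivative dlap (\<lambda>j. G \<beta> (u t j)) k) (at t)" if "0 < t" for k t
  proof -
    obtain u' where "\<forall>t>0. ((\<lambda>s. u s k) has_real_derivative u' t) (at t)"
      "\<forall>t>0. u' t = dlap (\<lambda>j. G \<beta> (u t j)) k"
      using sol unfolding is_solution_def by meson
    thus ?thesis using that by auto
  qed
  have lim: "((\<lambda>s. supnorm (\<lambda>k. u s k - u 0 k)) \<longlongrightarrow> 0) (at 0 within {0..})"
    using sol unfolding is_solution_def by auto
  have c0: "((\<lambda>s. u s k) \<longlongrightarrow> u 0 k) (at 0 within {0..})" for k
  proof -
    have "((\<lambda>s. u s k - u 0 k) \<longlongrightarrow> 0) (at 0 within {0..})"
    proof (rule tendsto_0_le[OF lim, of _ 1])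
      have "eventually (\<lambda>s. s \<in> {0::real..}) (at 0 within {0..})"
        by (simp add: eventually_at_filter)
      thus "\<forall>\<^sub>F s in at 0 within {0..}. norm (u s k - u 0 k) \<le> norm (supnorm (\<lambda>k. u s k - u 0 k)) * 1"
      proof eventually_elim
        case (elim s)
        have bd: "bdd_above (range (\<lambda>k. \<bar>u s k - u 0 k\<bar>))"
        proof (rule bdd_aboveI[of _ "M - \<delta>"])
          fix x assume "x \<in> range (\<lambda>k. \<bar>u s k - u 0 k\<bar>)"
          then obtain j where j: "x = \<bar>u s j - u 0 j\<bar>" by auto
          have "\<delta> \<le> u s j" "u s j \<le> M" "\<delta> \<le> u 0 j" "u 0 j \<le> M" using bnd elim by auto
          thus "x \<le> M - \<delta>" using j by linarith
        qed
        have "\<bar>u s k - u 0 k\<bar> \<le> supnorm (\<lambda>k. u s k - u 0 k)"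
          unfolding supnorm_def by (rule cSUP_upper[OF _ bd]) simp
        thus ?case by simp
      qed
    qed
    thus ?thesis by (simp add: LIM_zero_iff)
  qed
  show "continuous_on {0..T} (\<lambda>s. u s k)" for k T
  proof (rule continuous_on_eq_continuous_within[THEN iffD2], intro ballI)
    fix x assume x: "x \<in> {0..T}"
    show "continuous (at x within {0..T}) (\<lambda>s. u s k)"
    proof (cases "x = 0")
      case True
      have "continuous (at 0 within {0..}) (\<lambda>s. u s k)"
        using c0 by (simp add: continuous_within)
      thus ?thesis using True by (rule_tac continuous_within_subset) auto
    next
      case False
      hence "0 < x" using x by simp
      thus ?thesis using DERIV_isCont[OF D[of x k]] by (simp add: continuous_at_imp_continuous_within)
    qed
  qed
qed

lemma tstar_facts:
  assumes b: "\<beta> < 0" and d: "0 < d" and bc0: "0 \<le> bb"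
    and t: "0 < t" "t \<le> (d / (2 * (bb + 1))) powr (1 - \<beta>)"
  shows "t powr alp \<beta> \<le> d / (2 * (bb + 1))" "(d / 2) powr \<beta> \<le> t powr (alp \<beta> - 1)"
proof -
  define q where "q = d / (2 * (bb + 1))"
  have "d / (2 * (bb + 1)) \<le> d / 2" by (rule divide_left_mono) (use d bc0 in auto)
  hence q: "0 < q" "q \<le> d / 2" using d bc0 unfolding q_def by auto
  note A = alp_facts[OF b]
  have e1: "(1 - \<beta>) * alp \<beta> = 1" and e2: "(1 - \<beta>) * (alp \<beta> - 1) = \<beta>"
    using b by (auto simp: alp_def field_simps)
  have "t powr alp \<beta> \<le> (q powr (1 - \<beta>)) powr alp \<beta>"
    using t A by (intro powr_mono2) (auto simp: q_def)
  also have "\<dots> = q" using q e1 by (simp add: powr_powr)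
  finally show "t powr alp \<beta> \<le> d / (2 * (bb + 1))" by (simp add: q_def)
  have "(d / 2) powr \<beta> \<le> q powr \<beta>" using powr_mono2'[of \<beta> q "d/2"] q b by simp
  also have "\<dots> = (q powr (1 - \<beta>)) powr (alp \<beta> - 1)" using e2 by (simp add: powr_powr)
  also have "\<dots> \<le> t powr (alp \<beta> - 1)"
    using powr_mono2'[of "alp \<beta> - 1" t "q powr (1 - \<beta>)"] t A by (simp add: q_def)
  finally show "(d / 2) powr \<beta> \<le> t powr (alp \<beta> - 1)" .
qed

lemma lower_bound:
  assumes b: "\<beta> < 0" and d: "0 < d" and dl: "0 < \<delta>" and u0: "u0 \<in> P_set L d"
    and sol: "is_solution \<beta> (\<lambda>k. max (u0 k) \<delta>) u"
    and bnd: "\<forall>t\<ge>0. \<forall>k. \<delta> \<le> u t k \<and> u t k \<le> M"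
    and t: "0 < t" "t \<le> (d / (2 * (bc \<beta> (L - 1) + 1))) powr (1 - \<beta>)"
  shows "Sc (L - 1) powr (1 / \<beta>) * t powr alp \<beta> \<le> u t k"
proof -
  define N where "N = L - 1"
  define tstar where "tstar = (d / (2 * (bc \<beta> N + 1))) powr (1 - \<beta>)"
  have bc0: "0 \<le> bc \<beta> N" using alp_facts[OF b] by (simp add: bc_def Sc_def)
  note TF = tstar_facts[OF b d bc0, folded tstar_def]
  have W: "\<And>k. \<exists>l. k < l \<and> l \<le> k + int L \<and> d \<le> u0 l" using Pset_window[OF u0] by blast
  note LF = lev_facts[OF W]
  have levN: "lev u0 d j \<le> N" for j using LF(1)[of j] by (simp add: N_def)
  note SF = sol_facts[OF sol bnd]
  define lv where "lv = lev u0 d"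
  define \<Lambda> where "\<Lambda> = - \<beta> * \<delta> powr (\<beta> - 1)"
  have L0: "\<Lambda> > 0" using b dl unfolding \<Lambda>_def by (intro mult_pos_pos) auto
  define e where "e = (\<lambda>t j. Fw \<beta> d N (lv j) t - u t j)"
  define D where "D = (\<lambda>t j. Fd \<beta> d N (lv j) t - dlap (\<lambda>i. G \<beta> (u t i)) j)"
  have upos: "0 < u s j" if "0 \<le> s" for s j using bnd that dl by (smt (verit))
  have Fle: "Fw \<beta> d N m s \<le> d" if "0 \<le> s" "s \<le> tstar" "m \<le> N" for s m
  proof (cases "s = 0")
    case True thus ?thesis using d by (simp add: Fw_def)
  next
    case False
    hence s0: "0 < s" using that by simp
    show ?thesis using Fw_pbound(3)[OF b d s0 TF[OF s0 that(2)] that(3)] .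
  qed
  have cmp: "e s j \<le> 0" if "0 \<le> s" "s \<le> tstar" for s j
  proof (rule comparison[OF L0, where e=e and D=D and B=d and T=tstar])
    show "continuous_on {0..tstar} (\<lambda>t. e t j)" for j
      unfolding e_def by (intro continuous_intros Fw_cont[OF b] SF(2))
    show "((\<lambda>t. e t j) has_real_derivative D t j) (at t)" if "0 < t" "t < tstar" for j t
      unfolding e_def D_def by (intro derivative_intros Fw_deriv[OF that(1)] SF(1)[OF that(1)])
    show "e t j \<le> d" if "0 \<le> t" "t \<le> tstar" for j t
      using Fle[OF that levN[of j]] upos[OF that(1), of j] by (simp add: e_def lv_def)
    show "e 0 j \<le> 0" for j
    proof -
      have "u 0 j = max (u0 j) \<delta>" using SF(3) by simp
      thus ?thesis using LF(3)[of j] dl by (auto simp: e_def Fw_def lv_def)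
    qed
    show "0 \<le> tstar" by (simp add: tstar_def)
    show "0 \<le> s" "s \<le> tstar" by fact+
    fix j t assume tt: "0 < t" "t < tstar" and ep: "e t j > 0"
    define m where "m = lv j"
    define ml where "ml = lv (j - 1)"
    define mr where "mr = lv (j + 1)"
    have st: "m = 0 \<or> (mr = m - 1 \<and> (ml = 0 \<or> ml = m + 1))"
    proof (cases "m = 0")
      case False
      have "lv j = (if d \<le> u0 j then 0 else Suc (lv (j + 1)))"
        using LF(4)[of "j + 1"] by (simp add: lv_def)
      hence "mr = m - 1" using False by (auto simp: m_def mr_def split: if_splits)
      moreover have "ml = 0 \<or> ml = m + 1" using LF(4)[of j] by (auto simp: ml_def m_def lv_def)
      ultimately show ?thesis by blast
    qed simp
    have tt': "t \<le> tstar" using tt by simp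
    have sub: "Fd \<beta> d N m t \<le> 2 * Fw \<beta> d N m t powr \<beta> - Fw \<beta> d N ml t powr \<beta> - Fw \<beta> d N mr t powr \<beta>"
      by (rule Fw_sub[OF b d tt(1) TF[OF tt(1) tt'] _ _ _ st]) (auto simp: m_def ml_def mr_def lv_def levN)
    have dl_eq: "dlap (\<lambda>i. G \<beta> (u t i)) j = 2 * u t j powr \<beta> - u t (j - 1) powr \<beta> - u t (j + 1) powr \<beta>"
      by (simp add: dlap_def G_def)
    have ub: "\<delta> \<le> u t i" for i using bnd tt by auto
    have Fpos: "0 < Fw \<beta> d N mm t" if "mm \<le> N" for mm
      using Fw_pbound(2)[OF b d tt(1) TF[OF tt(1) tt'] that] .
    have h1: "Fw \<beta> d N m t powr \<beta> \<le> u t j powr \<beta>"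
      using powr_mono2'[of \<beta> "u t j" "Fw \<beta> d N m t"] b ep upos[of t j] tt by (simp add: e_def m_def)
    have h2: "u t (j - 1) powr \<beta> - Fw \<beta> d N ml t powr \<beta> \<le> \<Lambda> * max 0 (e t (j - 1))"
      using powr_lip[OF b dl ub Fpos] levN by (simp add: \<Lambda>_def e_def ml_def lv_def)
    have h3: "u t (j + 1) powr \<beta> - Fw \<beta> d N mr t powr \<beta> \<le> \<Lambda> * max 0 (e t (j + 1))"
      using powr_lip[OF b dl ub Fpos] levN by (simp add: \<Lambda>_def e_def mr_def lv_def)
    show "D t j \<le> \<Lambda> * (max 0 (e t (j - 1)) + max 0 (e t (j + 1)))"
      using sub dl_eq h1 h2 h3 unfolding D_def m_def[symmetric] by (simp add: distrib_left)
  qed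
  have "t \<le> tstar" using t by (simp add: tstar_def N_def)
  hence "Fw \<beta> d N (lv k) t \<le> u t k" using cmp[of t k] t by (simp add: e_def)
  moreover have "Sc N powr (1 / \<beta>) * t powr alp \<beta> \<le> Fw \<beta> d N (lv k) t"
    using Fw_pbound(4)[OF b d t(1) TF[OF t(1) \<open>t \<le> tstar\<close>] levN] by (simp add: lv_def)
  ultimately show ?thesis by (simp add: N_def)
qed

lemma holder_ordered:
  assumes b: "\<beta> < 0" and d: "0 < d" and dl: "0 < \<delta>" and u0: "u0 \<in> P_set L d"
    and sol: "is_solution \<beta> (\<lambda>k. max (u0 k) \<delta>) u"
    and bnd: "\<forall>t\<ge>0. \<forall>k. \<delta> \<le> u t k \<and> u t k \<le> M"
    and tt: "0 \<le> t1" "t1 \<le> t2" "t2 \<le> (d / (2 * (bc \<beta> (L - 1) + 1))) powr (1 - \<beta>)"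
  shows "\<bar>u t2 k - u t1 k\<bar> \<le> max ((2 * (1 - \<beta>)) powr alp \<beta>)
            (2 * (Sc (L - 1) powr (1 / \<beta>)) powr \<beta> / alp \<beta>) * (t2 - t1) powr alp \<beta>"
proof -
  define \<alpha> where "\<alpha> = alp \<beta>"
  define c where "c = Sc (L - 1) powr (1 / \<beta>)"
  define K1 where "K1 = 2 * (1 - \<beta>)"
  define Q where "Q = 2 * c powr \<beta> / \<alpha>"
  define h where "h = t2 - t1"
  note A = alp_facts[OF b, folded \<alpha>_def]
  note SF = sol_facts[OF sol bnd]
  have upos: "0 < u s j" if "0 \<le> s" for s j using bnd that dl by (smt (verit))
  have dl_eq: "dlap (\<lambda>i. G \<beta> (u s i)) k = 2 * u s k powr \<beta> - u s (k - 1) powr \<beta> - u s (k + 1) powr \<beta>" for s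
    by (simp add: dlap_def G_def)
  have contu: "continuous_on {t1..t2} (\<lambda>s. u s k)"
    using SF(2)[where k=k and T=t2] by (rule continuous_on_subset) (use tt in auto)
  have "K1 * t1 - u t1 k powr (1 - \<beta>) \<le> K1 * t2 - u t2 k powr (1 - \<beta>)"
  proof (rule DERIV_nonneg_imp_increasing_open[where f="\<lambda>s. K1 * s - u s k powr (1 - \<beta>)"])
    show "t1 \<le> t2" by fact
    show "continuous_on {t1..t2} (\<lambda>s. K1 * s - u s k powr (1 - \<beta>))"
    proof (intro continuous_intros contu ballI)
      fix x assume "x \<in> {t1..t2}" thus "u x k \<noteq> 0" using upos[of x k] tt by auto
    qed
    fix s assume s: "t1 < s" "s < t2"
    hence s0: "0 < s" using tt by simp
    define u' where "u' = dlap (\<lambda>i. G \<beta> (u s i)) k"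
    have "((\<lambda>s. K1 * s - u s k powr (1 - \<beta>)) has_real_derivative
            K1 - (1 - \<beta>) * u s k powr (1 - \<beta> - of_nat 1) * u') (at s)"
    proof -
      have k1: "((\<lambda>s. K1 * s) has_real_derivative K1) (at s)" by (auto intro!: derivative_eq_intros)
      show ?thesis
        using DERIV_diff[OF k1 DERIV_fun_powr[OF SF(1)[OF s0, of k] upos[of s k], of "1 - \<beta>"]] s0
        by (simp add: u'_def)
    qed
    moreover have "(1 - \<beta>) * u s k powr (1 - \<beta> - of_nat 1) * u' \<le> K1"
    proof -
      have "0 \<le> u s (k - 1) powr \<beta>" "0 \<le> u s (k + 1) powr \<beta>" by simp_all
      hence "u' \<le> 2 * u s k powr \<beta>" using dl_eq[of s] unfolding u'_def by linarith
      hence "(1 - \<beta>) * u s k powr (- \<beta>) * u' \<le> (1 - \<beta>) * u s k powr (- \<beta>) * (2 * u s k powr \<beta>)"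
        using b by (intro mult_left_mono) auto
      also have "\<dots> = 2 * (1 - \<beta>) * (u s k powr (- \<beta>) * u s k powr \<beta>)" by simp
      also have "u s k powr (- \<beta>) * u s k powr \<beta> = 1"
        using upos[of s k] s0 by (simp add: powr_add[symmetric])
      finally show ?thesis by (simp add: K1_def)
    qed
    ultimately show "\<exists>y. ((\<lambda>s. K1 * s - u s k powr (1 - \<beta>)) has_real_derivative y) (at s) \<and> 0 \<le> y"
      by force
  qed
  hence up1: "u t2 k powr (1 - \<beta>) \<le> u t1 k powr (1 - \<beta>) + K1 * h" by (simp add: h_def algebra_simps)
  have inv: "(x powr (1 - \<beta>)) powr \<alpha> = x" if "0 < x" for x
    using that b by (simp add: powr_powr \<alpha>_def alp_def)
  have up: "u t2 k - u t1 k \<le> K1 powr \<alpha> * h powr \<alpha>"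
  proof -
    have "u t2 k = (u t2 k powr (1 - \<beta>)) powr \<alpha>" using inv upos tt by simp
    also have "\<dots> \<le> (u t1 k powr (1 - \<beta>) + K1 * h) powr \<alpha>"
      using up1 A by (intro powr_mono2) auto
    also have "\<dots> \<le> (u t1 k powr (1 - \<beta>)) powr \<alpha> + (K1 * h) powr \<alpha>"
      using A b tt by (intro powr_subadd) (auto simp: K1_def h_def)
    also have "\<dots> = u t1 k + K1 powr \<alpha> * h powr \<alpha>"
      using inv upos tt by (simp add: powr_mult)
    finally show ?thesis by simp
  qed
  have c0: "0 < c" by (simp add: c_def Sc_def)
  have "u t1 k + Q * t1 powr \<alpha> \<le> u t2 k + Q * t2 powr \<alpha>"
  proof (rule DERIV_nonneg_imp_increasing_open[where f="\<lambda>s. u s k + Q * s powr \<alpha>"])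
    show "t1 \<le> t2" by fact
    show "continuous_on {t1..t2} (\<lambda>s. u s k + Q * s powr \<alpha>)"
    proof -
      have cp: "continuous_on {t1..t2} (\<lambda>s. s powr \<alpha>)"
        using powr_cont0[OF A(1), of t2] by (rule continuous_on_subset) (use tt in auto)
      show ?thesis by (intro continuous_on_add continuous_on_mult continuous_on_const contu cp)
    qed
    fix s assume s: "t1 < s" "s < t2"
    hence s0: "0 < s" using tt by simp
    define u' where "u' = dlap (\<lambda>i. G \<beta> (u s i)) k"
    have "((\<lambda>s. u s k + Q * s powr \<alpha>) has_real_derivative u' + Q * (\<alpha> * s powr (\<alpha> - 1))) (at s)"
      using SF(1)[OF s0, of k] s0 by (auto intro!: derivative_eq_intros simp: u'_def)
    moreover have "0 \<le> u' + Q * (\<alpha> * s powr (\<alpha> - 1))"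
    proof -
      have pb: "u s i powr \<beta> \<le> c powr \<beta> * s powr (\<alpha> - 1)" for i
      proof -
        have lb: "c * s powr \<alpha> \<le> u s i"
          using lower_bound[OF b d dl u0 sol bnd s0, of i] s tt by (simp add: c_def \<alpha>_def)
        have "u s i powr \<beta> \<le> (c * s powr \<alpha>) powr \<beta>"
          using powr_mono2'[OF _ _ lb] b c0 s0 by simp
        also have "\<dots> = c powr \<beta> * s powr (\<alpha> - 1)"
          using A by (simp add: powr_mult powr_powr)
        finally show ?thesis .
      qed
      have "0 \<le> u s k powr \<beta>" by simp
      hence "- (u s (k - 1) powr \<beta>) - (u s (k + 1) powr \<beta>) \<le> u'"
        using dl_eq[of s] unfolding u'_def by linarith
      moreover have "Q * (\<alpha> * s powr (\<alpha> - 1)) = 2 * (c powr \<beta> * s powr (\<alpha> - 1))"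
        using A by (simp add: Q_def)
      ultimately show ?thesis using pb[of "k-1"] pb[of "k+1"] by linarith
    qed
    ultimately show "\<exists>y. ((\<lambda>s. u s k + Q * s powr \<alpha>) has_real_derivative y) (at s) \<and> 0 \<le> y"
      by blast
  qed
  moreover have "t2 powr \<alpha> \<le> t1 powr \<alpha> + h powr \<alpha>"
    using powr_subadd[of t1 h \<alpha>] A tt by (simp add: h_def)
  moreover have "Q \<ge> 0" using A by (simp add: Q_def)
  ultimately have lo: "u t1 k - u t2 k \<le> Q * h powr \<alpha>"
  proof -
    assume a: "u t1 k + Q * t1 powr \<alpha> \<le> u t2 k + Q * t2 powr \<alpha>"
      "t2 powr \<alpha> \<le> t1 powr \<alpha> + h powr \<alpha>" "0 \<le> Q"
    have "Q * t2 powr \<alpha> \<le> Q * (t1 powr \<alpha> + h powr \<alpha>)" using a by (intro mult_left_mono) auto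
    thus ?thesis using a(1) by (simp add: distrib_left)
  qed
  have "K1 powr \<alpha> * h powr \<alpha> \<le> max (K1 powr \<alpha>) Q * h powr \<alpha>"
    by (intro mult_right_mono) auto
  moreover have "Q * h powr \<alpha> \<le> max (K1 powr \<alpha>) Q * h powr \<alpha>"
    by (intro mult_right_mono) auto
  ultimately have "\<bar>u t2 k - u t1 k\<bar> \<le> max (K1 powr \<alpha>) Q * h powr \<alpha>"
    using up lo by linarith
  thus ?thesis by (simp add: K1_def Q_def c_def \<alpha>_def h_def)
qed

theorem corollaryA11:
  fixes \<beta> d :: real and L :: nat
  assumes "\<beta> < 0" and "d > 0"
  shows "\<exists>tstar C. tstar > 0 \<and>
    (\<forall>u0 \<in> P_set L d. \<forall>\<delta> > 0. \<forall>u :: real \<Rightarrow> int \<Rightarrow> real.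
       is_solution \<beta> (\<lambda>k. max (u0 k) \<delta>) u \<longrightarrow>
       (\<forall>t\<ge>0. \<forall>k. \<delta> \<le> u t k \<and> u t k \<le> supnorm (\<lambda>k. max (u0 k) \<delta>)) \<longrightarrow>
       (\<forall>t1 \<in> {0..tstar}. \<forall>t2 \<in> {0..tstar}. \<forall>k.
          \<bar>u t2 k - u t1 k\<bar> \<le> C * \<bar>t2 - t1\<bar> powr (1 / (1 - \<beta>))))"
proof -
  define tstar where "tstar = (d / (2 * (bc \<beta> (L - 1) + 1))) powr (1 - \<beta>)"
  define C where "C = max ((2 * (1 - \<beta>)) powr alp \<beta>)
            (2 * (Sc (L - 1) powr (1 / \<beta>)) powr \<beta> / alp \<beta>)"
  have bc0: "0 \<le> bc \<beta> (L - 1)" using alp_facts[OF assms(1)] by (simp add: bc_def Sc_def)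
  have "tstar > 0" using assms bc0 by (simp add: tstar_def)
  moreover have "\<forall>u0 \<in> P_set L d. \<forall>\<delta> > 0. \<forall>u :: real \<Rightarrow> int \<Rightarrow> real.
       is_solution \<beta> (\<lambda>k. max (u0 k) \<delta>) u \<longrightarrow>
       (\<forall>t\<ge>0. \<forall>k. \<delta> \<le> u t k \<and> u t k \<le> supnorm (\<lambda>k. max (u0 k) \<delta>)) \<longrightarrow>
       (\<forall>t1 \<in> {0..tstar}. \<forall>t2 \<in> {0..tstar}. \<forall>k.
          \<bar>u t2 k - u t1 k\<bar> \<le> C * \<bar>t2 - t1\<bar> powr (1 / (1 - \<beta>)))"
  proof (intro ballI allI impI)
    fix u0 \<delta> u t1 t2 k
    assume u0: "u0 \<in> P_set L d" and dl: "0 < \<delta>" and sol: "is_solution \<beta> (\<lambda>k. max (u0 k) \<delta>) u"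
      and bnd: "\<forall>t\<ge>0. \<forall>k. \<delta> \<le> u t k \<and> u t k \<le> supnorm (\<lambda>k. max (u0 k) \<delta>)"
      and t1: "t1 \<in> {0..tstar}" and t2: "t2 \<in> {0..tstar}"
    note H = holder_ordered[OF assms(1,2) dl u0 sol bnd, folded tstar_def C_def alp_def]
    show "\<bar>u t2 k - u t1 k\<bar> \<le> C * \<bar>t2 - t1\<bar> powr (1 / (1 - \<beta>))"
    proof (cases "t1 \<le> t2")
      case True
      thus ?thesis using H[of t1 t2 k] t1 t2 by (simp add: alp_def)
    next
      case False
      thus ?thesis using H[of t2 t1 k] t1 t2 by (simp add: alp_def abs_minus_commute)
    qed
  qed
  ultimately show ?thesis by blast
qed

end
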